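(* Let $\alpha,\beta,\gamma>0$ and let $X$ have the hyper-exponential (generalized gamma) density $$\rho(t)=\frac{\gamma\,\beta^{-\alpha/\gamma}}{\Gamma(\alpha/\gamma)}\,t^{\alpha-1}\exp(-t^\gamma/\beta),\qquad t>0.$$ Then, for every choice of the parameters $\alpha,\beta,\gamma>0$, the distribution of $X$ is $q$-moment determinate for every $q\in(0,1)$ (even though it is moment indeterminate in the classical sense when $\gamma\in(0,\tfrac12)$).
   Context: For $0<q<1$: a $q$-density of $X\ge0$ is a function $f$ on $(0,\infty)$ with $F_X(x)=x(1-q)\sum_{j\ge0}f(xq^j)q^j$ for all $x>0$ (one may take $f(t)=\frac{F_X(t)-F_X(qt)}{t(1-q)}$); the $q$-moments are $m_q(n;X)=(1-q)\sum_{j\in\mathbb{Z}}q^{j(n+1)}f(q^j)$, $n\in\mathbb{N}_0$; $P_X$ is $q$-moment determinate if every $Y$ with $q$-density $g$ and $m_q(k;Y)=m_q(k;X)$ for all $k\in\mathbb{N}_0$ satisfies $g(q^j)=f(q^j)$ for all $j\in\mathbb{Z}$. The moments of $X$ are $\mu_n=\beta^{n/\gamma}\Gamma((n+\alpha)/\gamma)/\Gamma(\alpha/\gamma)$. *)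

theory Defs
  imports "HOL-Probability.Probability"
begin

definition gg_density :: "real \<Rightarrow> real \<Rightarrow> real \<Rightarrow> real \<Rightarrow> real" where
  "gg_density \<alpha> \<beta> \<gamma> t =
     \<gamma> * \<beta> powr (-\<alpha>/\<gamma>) / Gamma (\<alpha>/\<gamma>) * t powr (\<alpha> - 1) * exp (- (t powr \<gamma>) / \<beta>)"

definition gen_gamma_dist :: "real \<Rightarrow> real \<Rightarrow> real \<Rightarrow> real measure" where
  "gen_gamma_dist \<alpha> \<beta> \<gamma> =
     density lborel (\<lambda>t. ennreal (if t > 0 then gg_density \<alpha> \<beta> \<gamma> t else 0))"

definition is_q_density :: "real \<Rightarrow> real measure \<Rightarrow> (real \<Rightarrow> real) \<Rightarrow> bool" where
  "is_q_density q M f \<longleftrightarrow>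
     (\<forall>x>0. (\<lambda>j::nat. x * (1 - q) * f (x * q ^ j) * q ^ j) sums (cdf M x))"

definition q_moment_exists :: "real \<Rightarrow> (real \<Rightarrow> real) \<Rightarrow> nat \<Rightarrow> bool" where
  "q_moment_exists q f n \<longleftrightarrow>
     (\<lambda>j::int. q powi (j * (int n + 1)) * f (q powi j)) summable_on UNIV"

definition q_moment :: "real \<Rightarrow> (real \<Rightarrow> real) \<Rightarrow> nat \<Rightarrow> real" where
  "q_moment q f n = (1 - q) * (\<Sum>\<^sub>\<infinity>j::int. q powi (j * (int n + 1)) * f (q powi j))"

definition q_moment_determinate :: "real \<Rightarrow> real measure \<Rightarrow> bool" where
  "q_moment_determinate q M \<longleftrightarrow>
     (\<forall>f. is_q_density q M f \<longrightarrow>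
       (\<forall>N g. prob_space N \<and> sets N = sets borel \<and> measure N {..<0} = 0 \<and>
              is_q_density q N g \<and>
              (\<forall>k. q_moment_exists q g k \<and> q_moment q g k = q_moment q f k) \<longrightarrow>
              (\<forall>j::int. g (q powi j) = f (q powi j))))"

end

theory Submission
  imports Defs "HOL-Real_Asymp.Real_Asymp"
begin


lemma geom_partial_le:
  fixes q :: real assumes "0 \<le> q" "q < 1"
  shows "(\<Sum>i\<in>{1..n}. q^i) \<le> q / (1-q)"
proof -
  have "(\<Sum>i\<in>{1..n}. q^i) = (q - q^(Suc n)) / (1-q)"
  proof (induction n)
    case 0 then show ?case by simp
  next
    case (Suc n)
    have "(\<Sum>i\<in>{1..Suc n}. q^i) = (\<Sum>i\<in>{1..n}. q^i) + q^(Suc n)" by simp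
    also have "\<dots> = (q - q^(Suc n)) / (1-q) + q^(Suc n)" by (simp only: Suc.IH)
    also have "\<dots> = (q - q^(Suc (Suc n))) / (1-q)" using assms by (simp add: field_simps)
    finally show ?case .
  qed
  also have "\<dots> \<le> q/(1-q)" using assms by (simp add: divide_right_mono)
  finally show ?thesis .
qed

lemma one_minus_ge_exp:
  fixes y :: real assumes "0 \<le> y" "y < 1"
  shows "exp (- y / (1 - y)) \<le> 1 - y"
proof -
  have "ln (1/(1-y)) \<le> 1/(1-y) - 1" using assms by (intro ln_le_minus_one) auto
  also have "\<dots> = y/(1-y)" using assms by (simp add: field_simps)
  finally have "- y/(1-y) \<le> ln (1-y)" using assms by (simp add: ln_div)
  hence "exp (- y/(1-y)) \<le> exp (ln (1-y))" by simp
  thus ?thesis using assms by simp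
qed

lemma qprod_lower:
  fixes q :: real assumes "0 \<le> q" "q < 1"
  shows "exp (- q / (1-q)^2) \<le> (\<Prod>i\<in>{1..n}. 1 - q^i)"
proof -
  have "exp (- q / (1-q)^2) \<le> exp (- (\<Sum>i\<in>{1..n}. q^i) / (1-q))"
    using geom_partial_le[OF assms, of n] assms
    by (simp add: power2_eq_square divide_right_mono flip: divide_divide_eq_left)
  also have "\<dots> = (\<Prod>i\<in>{1..n}. exp (- (q^i)/(1-q)))"
    by (simp add: exp_sum[symmetric] sum_negf sum_divide_distrib)
  also have "\<dots> \<le> (\<Prod>i\<in>{1..n}. 1 - q^i)"
  proof (rule prod_mono, safe)
    fix i :: nat assume i: "i \<in> {1..n}"
    have qi: "q^i \<le> q" "0 \<le> q^i" using assms i power_decreasing[of 1 i q] by auto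
    have "exp (- (q^i)/(1-q)) \<le> exp (- (q^i)/(1-q^i))"
      using qi assms by (simp add: frac_le)
    also have "\<dots> \<le> 1 - q^i" using qi assms by (intro one_minus_ge_exp) auto
    finally show "exp (- (q^i)/(1-q)) \<le> 1 - q^i" .
  qed auto
  finally show ?thesis .
qed

lemma lattice_core:
  fixes L :: real and a :: "int \<Rightarrow> real" and t :: int
  assumes L: "L > 0"
    and mom: "\<And>m. ((\<lambda>j. a j * exp (- L * of_int j) ^ m) has_sum 0) UNIV"
    and tail: "(\<lambda>n. infsum (\<lambda>j. \<bar>a j\<bar> * exp (- L * of_int j) ^ (4*n)) UNIV
                   * exp (L * (4 * real n * of_int t - 2 * real n * (real n + 1)))) \<longlonglongrightarrow> 0"
  shows "a t = 0"
proof -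
  define x where "x = (\<lambda>j::int. exp (- L * of_int j))"
  define q where "q = exp (- L)"
  have q0: "0 < q" and q1: "q < 1" using L by (auto simp: q_def)
  have xpos: "x j > 0" for j by (simp add: x_def)
  have qpow: "q ^ i = exp (- L * real i)" for i :: nat
    by (simp add: q_def flip: exp_of_nat_mult)
  define P where "P = (\<lambda>n::nat. \<lambda>j::int. \<Prod>i\<in>{1..n}. 1 - q^i / x t * x j)"
  have good: "((\<lambda>j. a j * P n j * x j ^ m) has_sum 0) UNIV" for n m
  proof (induction n arbitrary: m)
    case 0
    show ?case using mom[of m] by (simp add: P_def x_def)
  next
    case (Suc n)
    have "((\<lambda>j. a j * P n j * x j ^ m + (- (q^(Suc n) / x t)) * (a j * P n j * x j ^ Suc m)) has_sum
           (0 + (- (q^(Suc n) / x t)) * 0)) UNIV"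
      by (intro has_sum_add has_sum_cmult_right Suc.IH)
    moreover have "a j * P n j * x j ^ m + (- (q^(Suc n) / x t)) * (a j * P n j * x j ^ Suc m)
                   = a j * P (Suc n) j * x j ^ m" for j
      by (simp add: P_def prod.nat_ivl_Suc' algebra_simps)
    ultimately show ?case by simp
  qed
  define A where "A = infsum (\<lambda>j. \<bar>a j\<bar>) UNIV"
  define B where "B = (\<lambda>n::nat. infsum (\<lambda>j. \<bar>a j\<bar> * x j ^ (4*n)) UNIV)"
  have sumA: "(\<lambda>j. \<bar>a j\<bar>) summable_on UNIV"
  proof -
    have "(\<lambda>j. a j) summable_on UNIV" using mom[of 0] by (auto simp: summable_on_def)
    thus ?thesis using summable_on_iff_abs_summable_on_real by auto
  qed
  have sumB: "(\<lambda>j. \<bar>a j\<bar> * x j ^ (4*n)) summable_on UNIV" for n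
  proof -
    have "(\<lambda>j. a j * x j ^ (4*n)) summable_on UNIV" using mom[of "4*n"] by (auto simp: summable_on_def x_def)
    hence "(\<lambda>j. \<bar>a j * x j ^ (4*n)\<bar>) summable_on UNIV" by (subst (asm) summable_on_iff_abs_summable_on_real) simp
    thus ?thesis by (simp add: abs_mult xpos less_imp_le)
  qed
  define \<delta> where "\<delta> = exp (- q / (1-q)^2)"
  have \<delta>: "\<delta> > 0" by (simp add: \<delta>_def)
  have main: "\<bar>a t\<bar> * \<delta> \<le> q^n * A + B n * exp (L * (4 * real n * of_int t - 2 * real n * (real n + 1)))" for n
  proof -
    define h where "h = (\<lambda>j. a j * P n j * x j ^ n)"
    define c where "c = 1 / (x t ^ n * x (t - int n - 1) ^ (2*n))"
    define e where "e = (\<lambda>j. \<bar>a j\<bar> * (q^n * x t ^ n) + c * (\<bar>a j\<bar> * x j ^ (4*n)))"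
    have cpos: "c > 0" by (simp add: c_def xpos)
    have hs: "(h has_sum 0) UNIV" using good[of n n] by (simp add: h_def)
    have hsum: "h summable_on UNIV" using hs by (auto simp: summable_on_def)
    have esum: "e summable_on UNIV" unfolding e_def
      by (intro summable_on_add summable_on_cmult_left summable_on_cmult_right sumA sumB)
    have enn: "e j \<ge> 0" for j using cpos q0 xpos[of t] xpos[of j] by (simp add: e_def)
    have xdiff: "x j / x t = exp (- L * of_int (j - t))" for j
      by (simp add: x_def field_simps flip: exp_add exp_diff)
    have fac: "q^i / x t * x j = exp (- L * (real i + of_int (j - t)))" for i j
    proof -
      have "q^i / x t * x j = q^i * (x j / x t)" by simp
      also have "\<dots> = exp (- L * (real i + of_int (j - t)))" by (simp add: qpow xdiff flip: exp_add) (simp add: algebra_simps)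
      finally show ?thesis .
    qed
    have hbound: "\<bar>h j\<bar> \<le> e j" if "j \<noteq> t" for j
    proof (cases "j > t")
      case True
      have "\<bar>P n j\<bar> \<le> 1"
      proof -
        have "\<forall>i\<in>{1..n}. 0 \<le> 1 - q^i / x t * x j \<and> 1 - q^i / x t * x j \<le> 1"
        proof
          fix i assume "i \<in> {1..n}"
          have "exp (- L * (real i + of_int (j - t))) \<le> 1" using L True by simp
          moreover have "exp (- L * (real i + of_int (j - t))) \<ge> 0" by simp
          ultimately show "0 \<le> 1 - q^i / x t * x j \<and> 1 - q^i / x t * x j \<le> 1" by (simp only: fac) simp
        qed
        hence "0 \<le> P n j \<and> P n j \<le> 1" unfolding P_def by (auto intro: prod_nonneg prod_le_1)
        thus ?thesis by simp
      qed
      moreover have "x j ^ n \<le> (q * x t) ^ n"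
      proof (rule power_mono)
        have "x j \<le> x (t+1)" unfolding x_def using True L by simp
        also have "x (t+1) = q * x t" by (simp add: x_def q_def algebra_simps flip: exp_add)
        finally show "x j \<le> q * x t" .
      qed (simp add: xpos less_imp_le)
      ultimately have "\<bar>P n j\<bar> * x j ^ n \<le> 1 * (q * x t) ^ n"
        by (intro mult_mono) (auto simp: xpos less_imp_le)
      hence "\<bar>h j\<bar> \<le> \<bar>a j\<bar> * (q^n * x t ^ n)"
        by (simp add: h_def abs_mult xpos less_imp_le power_mult_distrib mult.assoc mult_left_mono)
      also have "\<dots> \<le> e j" using cpos xpos[of j] by (simp add: e_def)
      finally show ?thesis .
    next
      case False
      hence jt: "j < t" using that by simp
      show ?thesis
      proof (cases "j \<ge> t - int n")
        case True
        define i where "i = nat (t - j)"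
        have i: "i \<in> {1..n}" "real i + of_int (j - t) = 0" using True jt by (auto simp: i_def)
        have z: "1 - q^i / x t * x j = 0" using i(2) by (simp only: fac) simp
        have "P n j = 0" unfolding P_def using i(1) z by (intro prod_zero) auto
        thus ?thesis using enn by (simp add: h_def)
      next
        case False
        hence jn: "j \<le> t - int n - 1" by simp
        have "\<bar>P n j\<bar> \<le> (\<Prod>i\<in>{1..n}. x j / x t)"
          unfolding P_def abs_prod
        proof (rule prod_mono, safe)
          fix i assume i: "i \<in> {1..n}"
          have "real i + of_int (j - t) \<le> 0" using i jn by simp
          hence "L * (real i + of_int (j - t)) \<le> 0" using L by (simp add: mult_nonneg_nonpos)
          hence ge1: "exp (- L * (real i + of_int (j - t))) \<ge> 1" by simp
          have "q^i * (x j / x t) \<le> 1 * (x j / x t)"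
            by (intro mult_right_mono) (auto simp: q0 q1 less_imp_le power_le_one xpos)
          then have "exp (- L * (real i + of_int (j - t))) \<le> x j / x t" using fac[of i j] by simp
          thus "\<bar>1 - q^i / x t * x j\<bar> \<le> x j / x t" using ge1 by (simp only: fac)
        qed auto
        also have "\<dots> = (x j / x t) ^ n" by simp
        finally have Pb: "\<bar>P n j\<bar> \<le> (x j / x t) ^ n" .
        have xle: "x (t - int n - 1) \<le> x j" unfolding x_def using jn L by simp
        have "\<bar>h j\<bar> \<le> \<bar>a j\<bar> * ((x j / x t) ^ n * x j ^ n)"
          unfolding h_def abs_mult using Pb
          by (simp add: mult.assoc, intro mult_left_mono mult_right_mono) (auto simp: xpos less_imp_le)
        also have "(x j / x t) ^ n * x j ^ n = x j ^ (2*n) / x t ^ n"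
          by (simp add: power_divide mult_2 power_add)
        also have "\<dots> \<le> c * x j ^ (4*n)"
        proof -
          have "x (t - int n - 1) ^ (2*n) \<le> x j ^ (2*n)" using xle by (intro power_mono) (auto simp: xpos less_imp_le)
          hence "x j ^ (2*n) * x (t - int n - 1) ^ (2*n) \<le> x j ^ (2*n) * x j ^ (2*n)"
            by (intro mult_left_mono) (auto simp: xpos less_imp_le)
          hence "x j ^ (2*n) * x (t - int n - 1) ^ (2*n) \<le> x j ^ (4*n)"
            by (simp flip: power_add)
          thus ?thesis using xpos[of t] xpos[of "t - int n - 1"]
            by (simp add: c_def field_simps)
        qed
        finally have "\<bar>h j\<bar> \<le> \<bar>a j\<bar> * (c * x j ^ (4*n))" by (simp add: mult_left_mono)
        also have "\<dots> \<le> e j" using q0 xpos[of t] by (simp add: e_def)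
        finally show ?thesis .
      qed
    qed
    have hsub: "h summable_on (UNIV - {t})" using hsum by (rule summable_on_subset) auto
    have "infsum h UNIV = h t + infsum h (UNIV - {t})"
      using infsum_insert[OF hsub, of t] by (simp add: insert_Diff_if)
    hence ht: "h t = - infsum h (UNIV - {t})" using hs by (simp add: infsumI)
    have "\<bar>h t\<bar> \<le> infsum (\<lambda>j. norm (h j)) (UNIV - {t})"
      using ht norm_infsum_bound[of h "UNIV - {t}"] hsub summable_on_iff_abs_summable_on_real by auto
    also have "\<dots> \<le> infsum e (UNIV - {t})"
    proof (rule infsum_mono)
      show "(\<lambda>j. norm (h j)) summable_on UNIV - {t}" using hsub summable_on_iff_abs_summable_on_real by auto
      show "e summable_on UNIV - {t}" using esum by (rule summable_on_subset) auto
    qed (use hbound in auto)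
    also have "\<dots> \<le> infsum e UNIV"
      by (rule infsum_mono2) (use esum enn in \<open>auto intro: summable_on_subset\<close>)
    also have "infsum e UNIV = q^n * x t ^ n * A + c * B n"
    proof -
      have "infsum e UNIV = infsum (\<lambda>j. \<bar>a j\<bar> * (q^n * x t ^ n)) UNIV
                           + infsum (\<lambda>j. c * (\<bar>a j\<bar> * x j ^ (4*n))) UNIV"
        unfolding e_def using sumA sumB[of n]
        by (intro infsum_add summable_on_cmult_left summable_on_cmult_right)
      also have "infsum (\<lambda>j. \<bar>a j\<bar> * (q^n * x t ^ n)) UNIV = A * (q^n * x t ^ n)"
        unfolding A_def using sumA by (rule infsum_cmult_left)
      also have "infsum (\<lambda>j. c * (\<bar>a j\<bar> * x j ^ (4*n))) UNIV = c * B n"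
        unfolding B_def using sumB[of n] by (rule infsum_cmult_right)
      finally show ?thesis by simp
    qed
    finally have hb: "\<bar>h t\<bar> \<le> q^n * x t ^ n * A + c * B n" .
    have Pt: "P n t = (\<Prod>i\<in>{1..n}. 1 - q^i)" using xpos[of t] by (simp add: P_def)
    have "\<delta> \<le> P n t" unfolding Pt \<delta>_def by (rule qprod_lower) (use q0 q1 in auto)
    hence "\<bar>a t\<bar> * \<delta> * x t ^ n \<le> \<bar>a t\<bar> * P n t * x t ^ n"
      by (intro mult_right_mono mult_left_mono) (auto simp: xpos less_imp_le)
    also have "\<dots> = \<bar>h t\<bar>" using \<delta> \<open>\<delta> \<le> P n t\<close> by (simp add: h_def abs_mult xpos less_imp_le)
    also have "\<dots> \<le> q^n * x t ^ n * A + c * B n" by (rule hb)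
    finally have "\<bar>a t\<bar> * \<delta> \<le> (q^n * x t ^ n * A + c * B n) / x t ^ n"
      using xpos[of t] by (simp add: pos_le_divide_eq)
    also have "\<dots> = q^n * A + c / x t ^ n * B n"
      using xpos[of t] by (simp add: field_simps)
    also have "c / x t ^ n = exp (L * (4 * real n * of_int t - 2 * real n * (real n + 1)))"
    proof -
      have E: "x t ^ n * x t ^ n * x (t - int n - 1) ^ (2*n)
           = exp (- (L * (4 * real n * of_int t - 2 * real n * (real n + 1))))"
        by (simp add: x_def flip: exp_of_nat_mult exp_add) (simp add: algebra_simps)
      have "c / x t ^ n = 1 / (x t ^ n * x t ^ n * x (t - int n - 1) ^ (2*n))"
        by (simp add: c_def divide_divide_eq_left mult_ac)
      also have "\<dots> = exp (L * (4 * real n * of_int t - 2 * real n * (real n + 1)))"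
        unfolding E exp_minus divide_inverse inverse_inverse_eq by simp
      finally show ?thesis .
    qed
    finally show ?thesis by (simp add: mult.commute B_def)
  qed
  have lim: "(\<lambda>n. q^n * A + B n * exp (L * (4 * real n * of_int t - 2 * real n * (real n + 1)))) \<longlonglongrightarrow> 0 * A + 0"
    using tail q0 q1 unfolding B_def x_def
    by (intro tendsto_add tendsto_mult LIMSEQ_power_zero tendsto_const) auto
  have "\<bar>a t\<bar> * \<delta> \<le> 0"
    by (rule LIMSEQ_le_const[OF lim[simplified]]) (use main in auto)
  thus ?thesis using \<delta> by (simp add: mult_le_0_iff)
qed



lemma gg_density_eq:
  assumes "\<alpha> > 0" "\<beta> > 0" "\<gamma> > 0"
  shows "gg_density \<alpha> \<beta> \<gamma> t = (\<gamma> * \<beta> powr (-\<alpha>/\<gamma>) / Gamma (\<alpha>/\<gamma>)) * t powr (\<alpha> - 1) * exp (- (t powr \<gamma>) / \<beta>)"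
  by (simp add: gg_density_def)

lemma gg_meas: "(\<lambda>t. ennreal (if t > 0 then gg_density \<alpha> \<beta> \<gamma> t else 0)) \<in> borel_measurable borel"
  unfolding gg_density_def by measurable

lemma gg_nonneg:
  assumes "\<alpha> > 0" "\<beta> > 0" "\<gamma> > 0" "t > 0"
  shows "gg_density \<alpha> \<beta> \<gamma> t \<ge> 0"
  using assms by (simp add: gg_density_def)

lemma gg_le_powr:
  assumes "\<alpha> > 0" "\<beta> > 0" "\<gamma> > 0" "t > 0"
  shows "gg_density \<alpha> \<beta> \<gamma> t \<le> (\<gamma> * \<beta> powr (-\<alpha>/\<gamma>) / Gamma (\<alpha>/\<gamma>)) * t powr (\<alpha> - 1)"
proof -
  have K: "(\<gamma> * \<beta> powr (-\<alpha>/\<gamma>) / Gamma (\<alpha>/\<gamma>)) * t powr (\<alpha> - 1) \<ge> 0" using assms by simp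
  have "exp (- (t powr \<gamma>) / \<beta>) \<le> 1" using assms by simp
  hence "(\<gamma> * \<beta> powr (-\<alpha>/\<gamma>) / Gamma (\<alpha>/\<gamma>)) * t powr (\<alpha> - 1) * exp (- (t powr \<gamma>) / \<beta>)
      \<le> (\<gamma> * \<beta> powr (-\<alpha>/\<gamma>) / Gamma (\<alpha>/\<gamma>)) * t powr (\<alpha> - 1) * 1"
    by (rule mult_left_mono[OF _ K])
  thus ?thesis by (simp add: gg_density_def)
qed

lemma gg_emeasure_finite:
  assumes "\<alpha> > 0" "\<beta> > 0" "\<gamma> > 0"
  shows "emeasure (gen_gamma_dist \<alpha> \<beta> \<gamma>) {..x} \<noteq> \<infinity>"
proof -
  define K where "K = \<gamma> * \<beta> powr (-\<alpha>/\<gamma>) / Gamma (\<alpha>/\<gamma>)"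
  define c where "c = max x 0"
  have Kpos: "K > 0" using assms by (simp add: K_def)
  have int: "(\<lambda>t. K * t powr (\<alpha> - 1)) integrable_on {0<..c}"
  proof -
    have "(\<lambda>t. t powr (\<alpha> - 1)) integrable_on {0<..c}"
      using assms by (intro integrable_on_powr_from_0') (auto simp: c_def)
    from integrable_on_cmult_left[OF this, of K] show ?thesis by simp
  qed
  then obtain I where I: "((\<lambda>t. K * t powr (\<alpha> - 1)) has_integral I) {0<..c}"
    using int integrable_on_def by blast
  have "emeasure (gen_gamma_dist \<alpha> \<beta> \<gamma>) {..x}
      = (\<integral>\<^sup>+ t. ennreal (if t > 0 then gg_density \<alpha> \<beta> \<gamma> t else 0) * indicator {..x} t \<partial>lborel)"
    unfolding gen_gamma_dist_def by (rule emeasure_density) (auto intro: gg_meas)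
  also have "\<dots> \<le> (\<integral>\<^sup>+ t. ennreal (K * t powr (\<alpha> - 1)) * indicator {0<..c} t \<partial>lborel)"
  proof (rule nn_integral_mono)
    fix t :: real
    show "ennreal (if t > 0 then gg_density \<alpha> \<beta> \<gamma> t else 0) * indicator {..x} t
          \<le> ennreal (K * t powr (\<alpha> - 1)) * indicator {0<..c} t"
    proof (cases "t > 0 \<and> t \<le> x")
      case True
      then show ?thesis using gg_le_powr[OF assms, of t] by (auto simp: indicator_def K_def c_def intro!: ennreal_leI)
    next
      case False
      then show ?thesis by (auto simp: indicator_def)
    qed
  qed
  also have "\<dots> = ennreal I"
    using I Kpos by (intro nn_integral_has_integral_lebesgue') auto
  finally have le: "emeasure (gen_gamma_dist \<alpha> \<beta> \<gamma>) {..x} \<le> ennreal I" .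
  show ?thesis unfolding infinity_ennreal_def by (rule neq_top_trans[OF ennreal_neq_top le])
qed

lemma gg_cdf_diff:
  assumes "\<alpha> > 0" "\<beta> > 0" "\<gamma> > 0" "a \<le> b"
  shows "cdf (gen_gamma_dist \<alpha> \<beta> \<gamma>) b - cdf (gen_gamma_dist \<alpha> \<beta> \<gamma>) a
         = measure (gen_gamma_dist \<alpha> \<beta> \<gamma>) {a<..b}"
proof -
  have "{..b} - {..a} = {a<..b}" using assms by auto
  moreover have "measure (gen_gamma_dist \<alpha> \<beta> \<gamma>) ({..b} - {..a})
     = measure (gen_gamma_dist \<alpha> \<beta> \<gamma>) {..b} - measure (gen_gamma_dist \<alpha> \<beta> \<gamma>) {..a}"
    using assms gg_emeasure_finite[OF assms(1-3), of b]
    by (intro measure_Diff) (auto simp: gen_gamma_dist_def)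
  ultimately show ?thesis by (simp add: cdf_def)
qed

lemma gg_measure_Ioc_bound:
  assumes "\<alpha> > 0" "\<beta> > 0" "\<gamma> > 0" "1 \<le> a" "a \<le> b"
  shows "measure (gen_gamma_dist \<alpha> \<beta> \<gamma>) {a<..b}
     \<le> (\<gamma> * \<beta> powr (-\<alpha>/\<gamma>) / Gamma (\<alpha>/\<gamma>)) * b powr \<alpha> * exp (- (a powr \<gamma>) / \<beta>) * (b - a)"
proof -
  define K where "K = \<gamma> * \<beta> powr (-\<alpha>/\<gamma>) / Gamma (\<alpha>/\<gamma>)"
  define C where "C = K * b powr \<alpha> * exp (- (a powr \<gamma>) / \<beta>)"
  have Kpos: "K > 0" using assms by (simp add: K_def)
  have Cpos: "C \<ge> 0" using Kpos by (simp add: C_def)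
  have pt: "gg_density \<alpha> \<beta> \<gamma> t \<le> C" if t: "a < t" "t \<le> b" for t
  proof -
    have "t powr (\<alpha> - 1) \<le> t powr \<alpha>" using t assms by (intro powr_mono) auto
    also have "\<dots> \<le> b powr \<alpha>" using t assms by (intro powr_mono2) auto
    finally have p1: "t powr (\<alpha> - 1) \<le> b powr \<alpha>" .
    have "a powr \<gamma> \<le> t powr \<gamma>" using t assms by (intro powr_mono2) auto
    hence "- (t powr \<gamma>) / \<beta> \<le> - (a powr \<gamma>) / \<beta>" using assms by (simp add: divide_right_mono)
    hence p2: "exp (- (t powr \<gamma>) / \<beta>) \<le> exp (- (a powr \<gamma>) / \<beta>)" by simp
    have "gg_density \<alpha> \<beta> \<gamma> t = K * t powr (\<alpha> - 1) * exp (- (t powr \<gamma>) / \<beta>)"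
      by (simp add: gg_density_def K_def)
    also have "\<dots> \<le> K * b powr \<alpha> * exp (- (a powr \<gamma>) / \<beta>)"
      using p1 p2 Kpos by (intro mult_mono mult_left_mono) auto
    finally show ?thesis by (simp add: C_def)
  qed
  have "emeasure (gen_gamma_dist \<alpha> \<beta> \<gamma>) {a<..b}
      = (\<integral>\<^sup>+ t. ennreal (if t > 0 then gg_density \<alpha> \<beta> \<gamma> t else 0) * indicator {a<..b} t \<partial>lborel)"
    unfolding gen_gamma_dist_def by (rule emeasure_density) (auto intro: gg_meas)
  also have "\<dots> \<le> (\<integral>\<^sup>+ t. ennreal C * indicator {a<..b} t \<partial>lborel)"
  proof (rule nn_integral_mono)
    fix t :: real
    show "ennreal (if t > 0 then gg_density \<alpha> \<beta> \<gamma> t else 0) * indicator {a<..b} t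
          \<le> ennreal C * indicator {a<..b} t"
    proof (cases "a < t \<and> t \<le> b")
      case True
      then show ?thesis using pt[of t] assms by (auto simp: indicator_def intro!: ennreal_leI)
    next
      case False
      then show ?thesis by (auto simp: indicator_def)
    qed
  qed
  also have "\<dots> = ennreal C * emeasure lborel {a<..b}"
    by (rule nn_integral_cmult_indicator) auto
  also have "\<dots> = ennreal (C * (b - a))"
    using assms Cpos by (simp add: ennreal_mult)
  finally have le: "emeasure (gen_gamma_dist \<alpha> \<beta> \<gamma>) {a<..b} \<le> ennreal (C * (b - a))" .
  have "measure (gen_gamma_dist \<alpha> \<beta> \<gamma>) {a<..b} \<le> enn2real (ennreal (C * (b - a)))"
    unfolding measure_def by (rule enn2real_mono[OF le]) simp
  also have "\<dots> = C * (b - a)" using Cpos assms by simp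
  finally show ?thesis by (simp add: C_def K_def)
qed



lemma phi_summable_nat:
  fixes A B D E :: real assumes D: "D > 0" and E: "E > 0"
  shows "summable (\<lambda>n::nat. exp (A * real n ^ 2 + B * real n - exp (D * (real n - 1)) / E))"
proof -
  have lim: "filterlim (\<lambda>y::real. A * y^2 + B * y + y - exp (D * (y - 1)) / E) at_bot at_top"
    using D E by real_asymp
  have ev: "eventually (\<lambda>y::real. A * y^2 + B * y + y - exp (D * (y - 1)) / E \<le> 0) at_top"
    using lim[unfolded filterlim_at_bot, rule_format, of 0] .
  have ev2: "eventually (\<lambda>n::nat. A * real n^2 + B * real n + real n - exp (D * (real n - 1)) / E \<le> 0) sequentially"
    using eventually_compose_filterlim[OF ev filterlim_real_sequentially] by simp
  show ?thesis
  proof (rule summable_comparison_test_ev)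
    show "eventually (\<lambda>n. norm (exp (A * real n ^ 2 + B * real n - exp (D * (real n - 1)) / E)) \<le> exp (-1) ^ n) sequentially"
      using ev2
    proof eventually_elim
      case (elim n)
      have "exp (A * real n ^ 2 + B * real n - exp (D * (real n - 1)) / E) \<le> exp (- real n)"
        using elim by simp
      also have "\<dots> = exp (-1) ^ n" by (simp flip: exp_of_nat_mult)
      finally show ?case by simp
    qed
    show "summable (\<lambda>n. exp (-1::real) ^ n)" by (rule summable_geometric) simp
  qed
qed

lemma psi_summable_int:
  fixes A B D E :: real assumes D: "D > 0" and E: "E > 0"
  shows "(\<lambda>j::int. if j < 0 then exp (A * (- of_int j) ^ 2 + B * (- of_int j) - exp (D * (- of_int j - 1)) / E) else 0)
           summable_on UNIV"
proof -
  define \<psi> where "\<psi> = (\<lambda>j::int. if j < 0 then exp (A * (- of_int j) ^ 2 + B * (- of_int j) - exp (D * (- of_int j - 1)) / E) else (0::real))"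
  define h where "h = (\<lambda>n::nat. - int n)"
  have inj: "inj_on h UNIV" by (auto simp: h_def inj_on_def)
  have s1: "(\<lambda>n::nat. exp (A * real n ^ 2 + B * real n - exp (D * (real n - 1)) / E)) summable_on UNIV"
    using phi_summable_nat[OF D E, of A B] by (subst summable_on_UNIV_nonneg_real_iff) auto
  have "(\<psi> \<circ> h) summable_on UNIV"
    by (rule summable_on_comparison_test[OF s1]) (simp_all add: \<psi>_def h_def)
  hence s2: "\<psi> summable_on (h ` UNIV)" using summable_on_reindex[OF inj] by blast
  have "\<psi> summable_on UNIV \<longleftrightarrow> \<psi> summable_on (h ` UNIV)"
  proof (rule summable_on_cong_neutral)
    fix j assume "j \<in> UNIV - h ` UNIV"
    hence jn: "j \<notin> range h" by simp
    have "j \<ge> 0"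
    proof (rule ccontr)
      assume "\<not> j \<ge> 0"
      hence "j = h (nat (-j))" by (simp add: h_def)
      thus False using jn by blast
    qed
    thus "\<psi> j = 0" by (simp add: \<psi>_def)
  qed auto
  with s2 show ?thesis by (simp add: \<psi>_def)
qed



lemma qdens_shift:
  assumes h: "is_q_density q M h" and x: "x > 0" and q: "q > 0"
  shows "cdf M x = cdf M (q * x) + x * (1 - q) * h x"
proof -
  define a where "a = (\<lambda>j::nat. x * (1 - q) * h (x * q ^ j) * q ^ j)"
  have qx: "(\<lambda>j::nat. (q*x) * (1 - q) * h ((q*x) * q ^ j) * q ^ j) sums cdf M (q*x)"
    using h x q unfolding is_q_density_def by simp
  have s: "a sums cdf M x"
    using h x unfolding is_q_density_def a_def by blast
  have "(\<lambda>j. a (Suc j)) = (\<lambda>j::nat. (q*x) * (1 - q) * h ((q*x) * q ^ j) * q ^ j)"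
    by (simp add: a_def mult_ac)
  with qx have "(\<lambda>j. a (Suc j)) sums cdf M (q*x)" by simp
  hence "a sums (cdf M (q*x) + a 0)" by (simp add: sums_Suc_iff)
  with s have "cdf M x = cdf M (q*x) + a 0" by (rule sums_unique2)
  thus ?thesis by (simp add: a_def)
qed

lemma qdens_zero:
  assumes h: "is_q_density q M h" and x: "x > 0" and z: "\<And>i::nat. h (x * q ^ i) = 0"
  shows "cdf M x = 0"
proof -
  have "(\<lambda>j::nat. x * (1 - q) * h (x * q ^ j) * q ^ j) sums cdf M x"
    using h x unfolding is_q_density_def by blast
  hence "(\<lambda>j::nat. 0::real) sums cdf M x" using z by simp
  thus ?thesis using sums_zero sums_unique2 by blast
qed

theorem mainTheorem8:
  fixes \<alpha> \<beta> \<gamma> q :: real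
  assumes "\<alpha> > 0" and "\<beta> > 0" and "\<gamma> > 0"
    and "0 < q" and "q < 1"
  shows "q_moment_determinate q (gen_gamma_dist \<alpha> \<beta> \<gamma>)"
  unfolding q_moment_determinate_def
proof (intro allI impI)
  note abc = assms(1-3)
  have q0: "q > 0" and q1: "q < 1" using assms by auto
  fix f N g and t :: int
  assume fq: "is_q_density q (gen_gamma_dist \<alpha> \<beta> \<gamma>) f"
  assume "prob_space N \<and> sets N = sets borel \<and> measure N {..<0} = 0 \<and> is_q_density q N g \<and>
          (\<forall>k. q_moment_exists q g k \<and> q_moment q g k = q_moment q f k)"
  hence PN: "prob_space N" and sN: "sets N = sets borel" and gq: "is_q_density q N g"
    and gex: "\<And>k. q_moment_exists q g k" and geq: "\<And>k. q_moment q g k = q_moment q f k" by auto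
  interpret N: real_distribution N using PN sN by (simp add: real_distribution_def real_distribution_axioms_def)
  define X where "X = gen_gamma_dist \<alpha> \<beta> \<gamma>"
  define L where "L = - ln q"
  have L: "L > 0" using q0 q1 by (simp add: L_def)
  define x where "x = (\<lambda>j::int. q powi j)"
  have xexp: "x j = exp (- L * of_int j)" for j
    using q0 by (simp add: x_def L_def powr_def flip: powr_real_of_int')
  have xpos: "x j > 0" for j by (simp add: xexp)
  have xsuc: "x (j + 1) = q * x j" for j using q0 by (simp add: x_def power_int_add)
  have xadd: "x j * q ^ i = x (j + int i)" for j i using q0 by (simp add: x_def power_int_add)
  define u where "u = (\<lambda>j. (1 - q) * x j * f (x j))"
  define v where "v = (\<lambda>j. (1 - q) * x j * g (x j))"
  have u_eq: "u j = cdf X (x j) - cdf X (x (j+1))" for j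
    using qdens_shift[OF fq xpos[of j] q0] by (simp add: u_def xsuc X_def)
  have v_eq: "v j = cdf N (x j) - cdf N (x (j+1))" for j
    using qdens_shift[OF gq xpos[of j] q0] by (simp add: v_def xsuc)
  have vnn: "v j \<ge> 0" for j
    unfolding v_eq using xsuc[of j] xpos[of j] q1 by (simp add: N.cdf_nondecreasing)
  define gk where "gk = (\<lambda>k::nat. \<lambda>j::int. q powi (j * (int k + 1)) * g (q powi j))"
  define fk where "fk = (\<lambda>k::nat. \<lambda>j::int. q powi (j * (int k + 1)) * f (q powi j))"
  have qpk: "q powi (j * (int k + 1)) = x j ^ k * x j" for j k
  proof -
    have "q powi (j * (int k + 1)) = (q powi j) powi (int (Suc k))" by (simp add: power_int_mult add.commute)
    also have "\<dots> = x j ^ k * x j" by (simp only: power_int_of_nat x_def) simp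
    finally show ?thesis .
  qed
  have gk_v: "(1 - q) * gk k j = x j ^ k * v j" for k j
    by (simp add: gk_def v_def qpk x_def mult_ac)
  have fk_u: "(1 - q) * fk k j = x j ^ k * u j" for k j
    by (simp add: fk_def u_def qpk x_def mult_ac)
  have gk_sum: "gk k summable_on UNIV" for k using gex[of k] by (simp add: q_moment_exists_def gk_def)
  have gk_nn: "gk k j \<ge> 0" for k j
  proof -
    have "(1 - q) * gk k j \<ge> 0" using vnn[of j] xpos[of j] by (simp add: gk_v)
    thus ?thesis using q1 by (simp add: zero_le_mult_iff)
  qed
  have gk_ne: "infsum (gk k) UNIV \<noteq> 0" for k
  proof
    assume S0: "infsum (gk k) UNIV = 0"
    have "gk k j = 0" for j
      using nonneg_infsum_le_0D[of "gk k" UNIV j] S0 gk_sum gk_nn by auto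
    hence g0: "g (x j) = 0" for j using xpos[of j] q0 by (simp add: gk_def qpk[symmetric] x_def)
    have G0: "cdf N (x j) = 0" for j
      by (rule qdens_zero[OF gq xpos]) (simp add: xadd g0)
    obtain y where y: "cdf N y > 1/2"
    proof -
      have "eventually (\<lambda>y. cdf N y > 1/2) at_top"
        using N.cdf_lim_at_top_prob by (rule order_tendstoD) simp
      then obtain y where "cdf N y > 1/2" by (metis eventually_at_top_linorder order_refl)
      thus ?thesis by (rule that)
    qed
    define j where "j = - \<lceil>y / L\<rceil>"
    have c1: "y / L \<le> of_int \<lceil>y / L\<rceil>" by (rule le_of_int_ceiling)
    have "y \<le> L * of_int \<lceil>y / L\<rceil>" using c1 unfolding pos_divide_le_eq[OF L] by (simp add: mult.commute)
    also have "\<dots> \<le> exp (L * of_int \<lceil>y / L\<rceil>)" using exp_ge_add_one_self[of "L * of_int \<lceil>y / L\<rceil>"] by linarith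
    also have "\<dots> = x j" by (simp add: xexp j_def)
    finally have "cdf N y \<le> cdf N (x j)" by (rule N.cdf_nondecreasing)
    thus False using y G0[of j] by simp
  qed
  have fk_sum: "fk k summable_on UNIV" for k
  proof (rule ccontr)
    assume "\<not> fk k summable_on UNIV"
    hence "infsum (fk k) UNIV = 0" by (rule infsum_not_exists)
    hence "q_moment q f k = 0" by (simp add: q_moment_def fk_def)
    hence "q_moment q g k = 0" using geq by simp
    thus False using gk_ne[of k] q1 by (simp add: q_moment_def gk_def)
  qed
  have S_eq: "infsum (gk k) UNIV = infsum (fk k) UNIV" for k
    using geq[of k] q1 by (simp add: q_moment_def gk_def fk_def)
  define a where "a = (\<lambda>j. v j - u j)"
  have mom: "((\<lambda>j. a j * exp (- L * of_int j) ^ m) has_sum 0) UNIV" for m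
  proof -
    have "((\<lambda>j. (1 - q) * (gk m j + - fk m j)) has_sum ((1 - q) * (infsum (gk m) UNIV + - infsum (fk m) UNIV))) UNIV"
    proof -
      have hf: "((\<lambda>j. - fk m j) has_sum (- infsum (fk m) UNIV)) UNIV"
        using has_sum_infsum[OF fk_sum[of m]] by (simp add: has_sum_uminus)
      show ?thesis by (intro has_sum_cmult_right has_sum_add hf has_sum_infsum gk_sum)
    qed
    moreover have "(1 - q) * (gk m j + - fk m j) = a j * exp (- L * of_int j) ^ m" for j
    proof -
      have "(1 - q) * (gk m j + - fk m j) = (1-q) * gk m j - (1-q) * fk m j" by (simp add: algebra_simps)
      also have "\<dots> = x j ^ m * v j - x j ^ m * u j" by (simp only: gk_v fk_u)
      also have "\<dots> = a j * exp (- L * of_int j) ^ m" by (simp add: a_def xexp algebra_simps)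
      finally show ?thesis .
    qed
    ultimately show ?thesis using S_eq[of m] by simp
  qed
  have xe: "exp (- L * of_int j) = x j" for j by (simp add: xexp)
  have usum: "(\<lambda>j. \<bar>u j\<bar> * x j ^ k) summable_on UNIV" for k
  proof -
    have "(\<lambda>j. (1 - q) * fk k j) summable_on UNIV" by (intro summable_on_cmult_right fk_sum)
    hence "(\<lambda>j. x j ^ k * u j) summable_on UNIV" by (simp add: fk_u)
    hence "(\<lambda>j. \<bar>x j ^ k * u j\<bar>) summable_on UNIV" by (subst (asm) summable_on_iff_abs_summable_on_real) simp
    thus ?thesis by (simp add: abs_mult xpos less_imp_le mult.commute)
  qed
  have uvsum: "infsum (\<lambda>j. v j * x j ^ k) UNIV \<le> infsum (\<lambda>j. \<bar>u j\<bar> * x j ^ k) UNIV" for k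
  proof -
    have "infsum (\<lambda>j. v j * x j ^ k) UNIV = infsum (\<lambda>j. (1 - q) * gk k j) UNIV"
      by (simp add: gk_v mult.commute)
    also have "\<dots> = (1 - q) * infsum (gk k) UNIV" by (rule infsum_cmult_right) (use gk_sum in auto)
    also have "\<dots> = (1 - q) * infsum (fk k) UNIV" by (simp add: S_eq)
    also have "\<dots> = infsum (\<lambda>j. (1 - q) * fk k j) UNIV" by (rule infsum_cmult_right[symmetric]) (use fk_sum in auto)
    also have "\<dots> = infsum (\<lambda>j. u j * x j ^ k) UNIV" by (simp add: fk_u mult.commute)
    also have "\<dots> \<le> infsum (\<lambda>j. \<bar>u j\<bar> * x j ^ k) UNIV"
    proof (rule infsum_mono)
      have "(\<lambda>j. (1 - q) * fk k j) summable_on UNIV" by (intro summable_on_cmult_right fk_sum)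
      thus "(\<lambda>j. u j * x j ^ k) summable_on UNIV" by (simp add: fk_u mult.commute)
    qed (use usum in \<open>auto intro!: mult_right_mono simp: xpos less_imp_le\<close>)
    finally show ?thesis .
  qed
  have vsum: "(\<lambda>j. v j * x j ^ k) summable_on UNIV" for k
  proof -
    have "(\<lambda>j. (1 - q) * gk k j) summable_on UNIV" by (intro summable_on_cmult_right gk_sum)
    thus ?thesis by (simp add: gk_v mult.commute)
  qed
  have asum: "(\<lambda>j. \<bar>a j\<bar> * x j ^ k) summable_on UNIV" for k
  proof -
    have "(\<lambda>j. a j * x j ^ k) summable_on UNIV" using mom[of k] unfolding xe by (auto simp: summable_on_def)
    hence "(\<lambda>j. \<bar>a j * x j ^ k\<bar>) summable_on UNIV" by (subst (asm) summable_on_iff_abs_summable_on_real) simp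
    thus ?thesis by (simp add: abs_mult xpos less_imp_le)
  qed
  have T1: "infsum (\<lambda>j. \<bar>a j\<bar> * x j ^ k) UNIV \<le> 2 * infsum (\<lambda>j. \<bar>u j\<bar> * x j ^ k) UNIV" for k
  proof -
    have "infsum (\<lambda>j. \<bar>a j\<bar> * x j ^ k) UNIV \<le> infsum (\<lambda>j. v j * x j ^ k + \<bar>u j\<bar> * x j ^ k) UNIV"
    proof (rule infsum_mono)
      show "(\<lambda>j. v j * x j ^ k + \<bar>u j\<bar> * x j ^ k) summable_on UNIV" by (intro summable_on_add vsum usum)
      fix j
      have "\<bar>a j\<bar> \<le> v j + \<bar>u j\<bar>" using vnn[of j] by (simp add: a_def)
      hence "\<bar>a j\<bar> * x j ^ k \<le> (v j + \<bar>u j\<bar>) * x j ^ k" by (rule mult_right_mono) (simp add: xpos less_imp_le)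
      thus "\<bar>a j\<bar> * x j ^ k \<le> v j * x j ^ k + \<bar>u j\<bar> * x j ^ k" by (simp add: algebra_simps)
    qed (rule asum)
    also have "\<dots> = infsum (\<lambda>j. v j * x j ^ k) UNIV + infsum (\<lambda>j. \<bar>u j\<bar> * x j ^ k) UNIV"
      by (intro infsum_add vsum usum)
    also have "\<dots> \<le> 2 * infsum (\<lambda>j. \<bar>u j\<bar> * x j ^ k) UNIV" using uvsum[of k] by simp
    finally show ?thesis .
  qed
  define K where "K = \<gamma> * \<beta> powr (-\<alpha>/\<gamma>) / Gamma (\<alpha>/\<gamma>)"
  have Kpos: "K > 0" using abc by (simp add: K_def)
  define \<psi> where "\<psi> = (\<lambda>j::int. if j < 0 then exp ((8*L) * (- of_int j) ^ 2 + ((\<alpha>+1)*L) * (- of_int j)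
                        - exp ((\<gamma>*L) * (- of_int j - 1)) / \<beta>) else 0)"
  have psum: "\<psi> summable_on UNIV" unfolding \<psi>_def
    using L abc by (intro psi_summable_int) auto
  have pnn: "\<psi> j \<ge> 0" for j by (simp add: \<psi>_def)
  define R where "R = infsum (\<lambda>j. \<bar>u j\<bar>) UNIV"
  define \<Psi> where "\<Psi> = infsum \<psi> UNIV"
  have ptw: "\<bar>u j\<bar> * x j ^ (4*n) \<le> \<bar>u j\<bar> + exp (L * real n ^ 2 / 2) * K * \<psi> j" for j n
  proof (cases "j < 0")
    case False
    have "x j \<le> 1" using False L by (simp add: xexp mult_nonneg_nonneg)
    hence "x j ^ (4*n) \<le> 1" using xpos[of j] by (simp add: power_le_one)
    hence "\<bar>u j\<bar> * x j ^ (4*n) \<le> \<bar>u j\<bar> * 1" by (intro mult_left_mono) auto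
    thus ?thesis using False by (simp add: \<psi>_def)
  next
    case True
    define M where "M = - real_of_int j"
    have M1: "M \<ge> 1" using True by (simp add: M_def)
    have xj: "x j = exp (L * M)" by (simp add: xexp M_def)
    have xj1: "x (j+1) = exp (L * (M - 1))" by (simp add: xexp M_def algebra_simps)
    have a1: "1 \<le> x (j+1)" using M1 L by (simp add: xj1)
    have ab: "x (j+1) \<le> x j" using L by (simp add: xj xj1)
    have "\<bar>u j\<bar> = measure X {x (j+1)<..x j}"
      using gg_cdf_diff[OF abc ab] by (simp add: u_eq X_def)
    also have "\<dots> \<le> K * x j powr \<alpha> * exp (- (x (j+1) powr \<gamma>) / \<beta>) * (x j - x (j+1))"
      unfolding X_def K_def by (rule gg_measure_Ioc_bound[OF abc a1 ab])
    also have "\<dots> \<le> K * exp (\<alpha> * (L * M)) * exp (- exp (\<gamma> * (L * (M - 1))) / \<beta>) * exp (L * M)"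
    proof -
      have "x j powr \<alpha> = exp (\<alpha> * (L * M))" by (simp add: powr_def xj)
      moreover have "x (j+1) powr \<gamma> = exp (\<gamma> * (L * (M - 1)))" by (simp add: powr_def xj1)
      moreover have "x j - x (j+1) \<le> exp (L * M)" using xpos[of "j+1"] by (simp add: xj)
      ultimately show ?thesis using Kpos by (simp add: mult_left_mono)
    qed
    also have "\<dots> = K * exp ((\<alpha>+1) * L * M - exp (\<gamma> * L * (M - 1)) / \<beta>)"
      by (simp add: mult.assoc flip: exp_add) (simp add: algebra_simps)
    finally have ub: "\<bar>u j\<bar> \<le> K * exp ((\<alpha>+1) * L * M - exp (\<gamma> * L * (M - 1)) / \<beta>)" .
    have xn: "x j ^ (4*n) = exp (4 * real n * L * M)" by (simp add: xj flip: exp_of_nat_mult)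
    have "\<bar>u j\<bar> * x j ^ (4*n) \<le> K * exp ((\<alpha>+1) * L * M - exp (\<gamma> * L * (M - 1)) / \<beta>) * exp (4 * real n * L * M)"
      using ub by (simp add: xn mult_right_mono)
    also have "\<dots> = K * exp ((\<alpha>+1) * L * M - exp (\<gamma> * L * (M - 1)) / \<beta> + 4 * real n * L * M)"
      by (simp add: mult.assoc flip: exp_add)
    also have "\<dots> \<le> K * exp (L * real n ^ 2 / 2 + (8*L * M^2 + (\<alpha>+1) * L * M - exp (\<gamma> * L * (M - 1)) / \<beta>))"
    proof -
      have "0 \<le> L * (real n - 4 * M)^2" using L by simp
      hence "4 * real n * L * M \<le> L * real n ^ 2 / 2 + 8 * L * M^2"
        by (simp add: power2_eq_square algebra_simps)
      thus ?thesis using Kpos by simp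
    qed
    also have "\<dots> = exp (L * real n ^ 2 / 2) * K * \<psi> j"
      using True by (simp add: \<psi>_def M_def mult_ac flip: exp_add)
    finally show ?thesis by simp
  qed
  have T2: "infsum (\<lambda>j. \<bar>u j\<bar> * x j ^ (4*n)) UNIV \<le> R + exp (L * real n ^ 2 / 2) * K * \<Psi>" for n
  proof -
    have "infsum (\<lambda>j. \<bar>u j\<bar> * x j ^ (4*n)) UNIV \<le> infsum (\<lambda>j. \<bar>u j\<bar> + exp (L * real n ^ 2 / 2) * K * \<psi> j) UNIV"
      using usum[of 0] usum[of "4*n"] psum ptw
      by (intro infsum_mono summable_on_add summable_on_cmult_right) auto
    also have "\<dots> = R + exp (L * real n ^ 2 / 2) * K * \<Psi>"
      using usum[of 0] psum unfolding R_def \<Psi>_def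
      by (subst infsum_add) (auto intro: summable_on_cmult_right simp: infsum_cmult_right)
    finally show ?thesis .
  qed
  have tail: "(\<lambda>n. infsum (\<lambda>j. \<bar>a j\<bar> * exp (- L * of_int j) ^ (4*n)) UNIV
                   * exp (L * (4 * real n * of_int t - 2 * real n * (real n + 1)))) \<longlonglongrightarrow> 0"
  proof (rule tendsto_sandwich)
    define E where "E = (\<lambda>n::nat. exp (L * (4 * real n * of_int t - 2 * real n * (real n + 1))))"
    show "eventually (\<lambda>n. 0 \<le> infsum (\<lambda>j. \<bar>a j\<bar> * exp (- L * of_int j) ^ (4*n)) UNIV
                   * exp (L * (4 * real n * of_int t - 2 * real n * (real n + 1)))) sequentially"
      by (intro always_eventually allI mult_nonneg_nonneg infsum_nonneg) auto
    show "eventually (\<lambda>n. infsum (\<lambda>j. \<bar>a j\<bar> * exp (- L * of_int j) ^ (4*n)) UNIV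
                   * exp (L * (4 * real n * of_int t - 2 * real n * (real n + 1)))
               \<le> 2 * R * E n + 2 * K * \<Psi> * exp (L * (real n ^ 2 / 2 + 4 * real n * of_int t - 2 * real n * (real n + 1)))) sequentially"
    proof (intro always_eventually allI)
      fix n
      have "infsum (\<lambda>j. \<bar>a j\<bar> * exp (- L * of_int j) ^ (4*n)) UNIV \<le> 2 * (R + exp (L * real n ^ 2 / 2) * K * \<Psi>)"
        unfolding xe using order.trans[OF T1[of "4*n"] mult_left_mono[OF T2[of n], of 2]] by simp
      hence "infsum (\<lambda>j. \<bar>a j\<bar> * exp (- L * of_int j) ^ (4*n)) UNIV * E n \<le> 2 * (R + exp (L * real n ^ 2 / 2) * K * \<Psi>) * E n"
        by (rule mult_right_mono) (simp add: E_def)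
      also have "\<dots> = 2 * R * E n + 2 * K * \<Psi> * exp (L * (real n ^ 2 / 2 + 4 * real n * of_int t - 2 * real n * (real n + 1)))"
        by (simp add: E_def algebra_simps flip: exp_add)
      finally show "infsum (\<lambda>j. \<bar>a j\<bar> * exp (- L * of_int j) ^ (4*n)) UNIV
                   * exp (L * (4 * real n * of_int t - 2 * real n * (real n + 1)))
               \<le> 2 * R * E n + 2 * K * \<Psi> * exp (L * (real n ^ 2 / 2 + 4 * real n * of_int t - 2 * real n * (real n + 1)))"
        by (simp add: E_def)
    qed
    have l1: "E \<longlonglongrightarrow> 0" unfolding E_def using L by real_asymp
    have l2: "(\<lambda>n::nat. exp (L * (real n ^ 2 / 2 + 4 * real n * of_int t - 2 * real n * (real n + 1)))) \<longlonglongrightarrow> 0"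
      using L by real_asymp
    show "(\<lambda>n. 2 * R * E n + 2 * K * \<Psi> * exp (L * (real n ^ 2 / 2 + 4 * real n * of_int t - 2 * real n * (real n + 1)))) \<longlonglongrightarrow> 0"
      using tendsto_add[OF tendsto_mult[OF tendsto_const l1] tendsto_mult[OF tendsto_const l2]] by simp
  qed auto
  have "a t = 0" by (rule lattice_core[OF L mom tail])
  hence "v t = u t" by (simp add: a_def)
  hence "g (x t) = f (x t)" using q1 xpos[of t] by (simp add: u_def v_def)
  thus "g (q powi t) = f (q powi t)" by (simp add: x_def)
qed

end
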